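(* Let $\boldsymbol\gamma\in(0,\infty)^B$, $P>0$, and parameters $0<\alpha<\beta$, $\kappa>0$, $a\in\mathbb R$ with $\kappa\log_2\alpha+a=\log_2(1+\alpha)$ and $\kappa(1+\alpha)\le\alpha$. Define \[ I^{\rm ref}(\rho)=\begin{cases}\log_2(1+\rho),&0\le\rho\le\alpha,\\ \kappa\log_2\rho+a,&\alpha<\rho\le\beta,\\ \kappa\log_2\beta+a,&\rho>\beta.\end{cases} \] A solution of maximizing $\sum_{b=1}^B I^{\rm ref}(p_b\gamma_b)$ subject to $\sum_{b=1}^B p_b\le BP$, $p_b\ge0$, is: $p^{\rm ref}_b=\beta/\gamma_b$ for all $b$ if $\frac1B\sum_b\beta/\gamma_b<P$; otherwise \[ p^{\rm ref}_b=\begin{cases}\beta/\gamma_b,&\eta\ge\frac{\beta}{\kappa\gamma_b},\\ \kappa\eta,&\frac{\alpha}{\kappa\gamma_b}\le\eta<\frac{\beta}{\kappa\gamma_b},\\ \alpha/\gamma_b,&\frac{\alpha+1}{\gamma_b}\le\eta<\frac{\alpha}{\kappa\gamma_b},\\ \eta-1/\gamma_b,&\frac1{\gamma_b}\le\eta<\frac{\alpha+1}{\gamma_b},\\ 0,&\text{otherwise},\end{cases} \] for $b=1,\dots,B$, where $\eta$ is chosen such that $\frac1B\sum_{b=1}^B p^{\rm ref}_b=P$.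
   Context: The function $I^{\rm ref}$ is a piecewise approximation (refined truncated water-filling) of a discrete-input mutual information curve; the condition $\kappa(1+\alpha)\le\alpha$ ensures that the slope of $I^{\rm ref}$ does not increase at $\rho=\alpha$. *)

theory Defs
  imports Complex_Main
begin

text \<open>Refined truncated water-filling approximation of the mutual information curve.
  Only evaluated at nonnegative arguments; the first branch is also used for negative rho.\<close>
definition I_ref :: "real \<Rightarrow> real \<Rightarrow> real \<Rightarrow> real \<Rightarrow> real \<Rightarrow> real" where
  "I_ref \<alpha> \<beta> \<kappa> a \<rho> =
     (if \<rho> \<le> \<alpha> then log 2 (1 + \<rho>)
      else if \<rho> \<le> \<beta> then \<kappa> * log 2 \<rho> + a
      else \<kappa> * log 2 \<beta> + a)"

definition feasible :: "nat \<Rightarrow> real \<Rightarrow> (nat \<Rightarrow> real) \<Rightarrow> bool" where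
  "feasible B P p \<longleftrightarrow> (\<forall>b\<in>{1..B}. p b \<ge> 0) \<and> (\<Sum>b=1..B. p b) \<le> real B * P"

definition objective :: "real \<Rightarrow> real \<Rightarrow> real \<Rightarrow> real \<Rightarrow> nat \<Rightarrow> (nat \<Rightarrow> real) \<Rightarrow> (nat \<Rightarrow> real) \<Rightarrow> real" where
  "objective \<alpha> \<beta> \<kappa> a B \<gamma> p = (\<Sum>b=1..B. I_ref \<alpha> \<beta> \<kappa> a (p b * \<gamma> b))"

definition is_optimal :: "real \<Rightarrow> real \<Rightarrow> real \<Rightarrow> real \<Rightarrow> nat \<Rightarrow> real \<Rightarrow> (nat \<Rightarrow> real) \<Rightarrow> (nat \<Rightarrow> real) \<Rightarrow> bool" where
  "is_optimal \<alpha> \<beta> \<kappa> a B P \<gamma> p \<longleftrightarrow>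
     feasible B P p \<and>
     (\<forall>q. feasible B P q \<longrightarrow> objective \<alpha> \<beta> \<kappa> a B \<gamma> q \<le> objective \<alpha> \<beta> \<kappa> a B \<gamma> p)"

definition p_ref_eta :: "real \<Rightarrow> real \<Rightarrow> real \<Rightarrow> real \<Rightarrow> real \<Rightarrow> real" where
  "p_ref_eta \<alpha> \<beta> \<kappa> g \<eta> =
     (if \<eta> \<ge> \<beta> / (\<kappa> * g) then \<beta> / g
      else if \<alpha> / (\<kappa> * g) \<le> \<eta> then \<kappa> * \<eta>
      else if (\<alpha> + 1) / g \<le> \<eta> then \<alpha> / g
      else if 1 / g \<le> \<eta> then \<eta> - 1 / g
      else 0)"

end

theory Submission
  imports Defs
begin

definition rr :: "real \<Rightarrow> real \<Rightarrow> real \<Rightarrow> real \<Rightarrow> real" where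
  "rr \<alpha> \<beta> \<kappa> s = min \<alpha> (max 0 (s-1)) + min \<beta> (max \<alpha> (\<kappa>*s)) - \<alpha>"

definition Jf :: "real \<Rightarrow> real \<Rightarrow> real \<Rightarrow> real \<Rightarrow> real \<Rightarrow> real" where
  "Jf \<alpha> \<beta> \<kappa> A \<rho> = (if \<rho> \<le> \<alpha> then ln (1+\<rho>) else if \<rho> \<le> \<beta> then \<kappa> * ln \<rho> + A else \<kappa> * ln \<beta> + A)"

lemma I_J: "ln 2 * I_ref \<alpha> \<beta> \<kappa> a \<rho> = Jf \<alpha> \<beta> \<kappa> (a * ln 2) \<rho>"
  by (simp add: I_ref_def Jf_def log_def algebra_simps)

lemma lnineq: fixes u v :: real assumes "u > 0" "v > 0" shows "ln u \<le> ln v + (u - v) / v"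
  using ln_diff_le[OF assms] by simp

lemma rr_cases:
  assumes "0 < \<alpha>" "\<alpha> < \<beta>" "\<kappa> > 0" "\<kappa> * (1 + \<alpha>) \<le> \<alpha>"
  shows "rr \<alpha> \<beta> \<kappa> s = (if s \<ge> \<beta>/\<kappa> then \<beta> else if \<alpha>/\<kappa> \<le> s then \<kappa>*s
      else if \<alpha>+1 \<le> s then \<alpha> else if 1 \<le> s then s - 1 else 0)"
proof -
  have k1: "\<alpha> + 1 \<le> s" if "\<alpha> \<le> \<kappa> * s" 
  proof (rule ccontr)
    assume "\<not> ?thesis"
    then have "\<kappa> * s < \<kappa> * (1 + \<alpha>)" using assms by (intro mult_strict_left_mono) auto
    then show False using assms that by linarith
  qed
  show ?thesis
    using assms k1
    by (auto simp: rr_def min_def max_def field_simps)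
qed

lemma p_eq:
  assumes "g > 0" "0 < \<alpha>" "\<alpha> < \<beta>" "\<kappa> > 0" "\<kappa> * (1 + \<alpha>) \<le> \<alpha>"
  shows "p_ref_eta \<alpha> \<beta> \<kappa> g \<eta> = rr \<alpha> \<beta> \<kappa> (g*\<eta>) / g"
  using assms unfolding rr_cases[OF assms(2-5)] p_ref_eta_def
  by (auto simp: field_simps)


locale P =
  fixes \<alpha> \<beta> \<kappa> A :: real
  assumes a0: "0 < \<alpha>" and ab: "\<alpha> < \<beta>" and k0: "\<kappa> > 0"
    and kA: "\<kappa> * ln \<alpha> + A = ln (1 + \<alpha>)" and kk: "\<kappa> * (1 + \<alpha>) \<le> \<alpha>"
begin

abbreviation "J \<equiv> Jf \<alpha> \<beta> \<kappa> A"

lemma kslope: "\<kappa> / \<alpha> \<le> 1 / (1 + \<alpha>)"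
  using kk a0 by (simp add: field_simps)

lemma tanA:
  assumes "0 \<le> t" "t \<le> \<alpha>" "0 \<le> \<rho>"
  shows "J \<rho> \<le> ln (1+t) + (\<rho> - t) / (1 + t)"
proof -
  have tan: "ln (1+x) \<le> ln (1+t) + (x - t) / (1 + t)" if "0 \<le> x" for x
    using lnineq[of "1+x" "1+t"] that assms by simp
  have mono: "(x - t) / (1 + t) \<le> (y - t) / (1+t)" if "x \<le> y" for x y
    using that assms by (simp add: divide_right_mono)
  have mid: "J x \<le> ln (1+t) + (x - t) / (1 + t)" if "\<alpha> < x" "x \<le> \<beta>" for x
  proof -
    have "J x = \<kappa> * ln x + A" using that by (simp add: Jf_def)
    also have "\<dots> = ln (1 + \<alpha>) + \<kappa> * (ln x - ln \<alpha>)" using kA by (simp add: algebra_simps)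
    also have "\<dots> \<le> ln (1 + \<alpha>) + \<kappa> * ((x - \<alpha>) / \<alpha>)"
      using ln_diff_le[of x \<alpha>] that a0 k0 by (intro add_left_mono mult_left_mono) auto
    also have "\<kappa> * ((x - \<alpha>) / \<alpha>) = (\<kappa> / \<alpha>) * (x - \<alpha>)" by simp
    also have "\<dots> \<le> (1 / (1+\<alpha>)) * (x - \<alpha>)" using kslope that by (intro mult_right_mono) auto
    also have "\<dots> \<le> (1 / (1+t)) * (x - \<alpha>)" using that assms a0
      by (intro mult_right_mono) (auto simp: field_simps)
    also have "ln (1 + \<alpha>) \<le> ln (1+t) + (\<alpha> - t) / (1 + t)" using tan a0 by simp
    finally have "J x \<le> ln (1 + t) + (\<alpha> - t) / (1 + t) + (x - \<alpha>) / (1 + t)" by simp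
    moreover have "(\<alpha> - t) / (1 + t) + (x - \<alpha>) / (1 + t) = (x - t) / (1 + t)"
      by (simp add: diff_divide_distrib)
    ultimately show ?thesis by linarith
  qed
  show ?thesis
  proof (cases "\<rho> \<le> \<alpha>")
    case True then show ?thesis using tan assms by (simp add: Jf_def)
  next
    case F: False
    show ?thesis
    proof (cases "\<rho> \<le> \<beta>")
      case True then show ?thesis using mid F by simp
    next
      case False
      then have "J \<rho> = J \<beta>" using ab by (simp add: Jf_def)
      also have "\<dots> \<le> ln (1+t) + (\<beta> - t) / (1 + t)" using mid ab by simp
      also have "\<dots> \<le> ln (1+t) + (\<rho> - t) / (1 + t)" using mono False by simp
      finally show ?thesis .
    qed
  qed
qed

lemma tanB:
  assumes "\<alpha> \<le> t" "t \<le> \<beta>" "0 \<le> \<rho>"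
  shows "J \<rho> \<le> \<kappa> * ln t + A + \<kappa> * (\<rho> - t) / t"
proof -
  have t0: "t > 0" using assms a0 by simp
  have tan: "\<kappa> * ln x + A \<le> \<kappa> * ln t + A + \<kappa> * (x - t) / t" if "0 < x" for x
    using ln_diff_le[of x t] that t0 k0 mult_left_mono[of "ln x - ln t" "(x-t)/t" \<kappa>]
    by (simp add: algebra_simps)
  have Ja: "J \<alpha> = \<kappa> * ln \<alpha> + A" using kA by (simp add: Jf_def)
  show ?thesis
  proof (cases "\<rho> \<le> \<alpha>")
    case True
    have "J \<rho> = ln (1 + \<rho>)" using True by (simp add: Jf_def)
    also have "\<dots> \<le> ln (1 + \<alpha>) + (\<rho> - \<alpha>) / (1 + \<alpha>)"
      using lnineq[of "1+\<rho>" "1+\<alpha>"] assms a0 by simp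
    also have "(\<rho> - \<alpha>) / (1 + \<alpha>) = (1 / (1+\<alpha>)) * (\<rho> - \<alpha>)" by simp
    also have "\<dots> \<le> (\<kappa> / \<alpha>) * (\<rho> - \<alpha>)"
      using kslope True by (intro mult_right_mono_neg) auto
    also have "\<dots> \<le> (\<kappa> / t) * (\<rho> - \<alpha>)"
      using True assms a0 k0 by (intro mult_right_mono_neg) (auto simp: field_simps)
    also have "ln (1 + \<alpha>) = \<kappa> * ln \<alpha> + A" using kA by simp
    also have "\<dots> \<le> \<kappa> * ln t + A + \<kappa> * (\<alpha> - t) / t" using tan a0 by simp
    finally have "J \<rho> \<le> \<kappa> * ln t + A + \<kappa> * (\<alpha> - t) / t + \<kappa> / t * (\<rho> - \<alpha>)" by simp
    moreover have "\<kappa> * (\<alpha> - t) / t + \<kappa> / t * (\<rho> - \<alpha>) = \<kappa> * (\<rho> - t) / t"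
      by (simp add: diff_divide_distrib right_diff_distrib)
    ultimately show ?thesis by linarith
  next
    case F: False
    show ?thesis
    proof (cases "\<rho> \<le> \<beta>")
      case True then show ?thesis using tan F a0 by (simp add: Jf_def)
    next
      case False
      then have "J \<rho> = \<kappa> * ln \<beta> + A" using ab by (simp add: Jf_def)
      also have "\<dots> \<le> \<kappa> * ln t + A + \<kappa> * (\<beta> - t) / t" using tan a0 ab by simp
      also have "\<dots> \<le> \<kappa> * ln t + A + \<kappa> * (\<rho> - t) / t"
        using False t0 k0 by (simp add: divide_right_mono)
      finally show ?thesis .
    qed
  qed
qed

lemma kkt:
  assumes "s > 0" "0 \<le> \<rho>"
  shows "J \<rho> \<le> J (rr \<alpha> \<beta> \<kappa> s) + (\<rho> - rr \<alpha> \<beta> \<kappa> s) / s"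
proof -
  have Jlo: "J t = ln (1+t)" if "t \<le> \<alpha>" for t using that by (simp add: Jf_def)
  have Jmid: "J t = \<kappa> * ln t + A" if "\<alpha> \<le> t" "t \<le> \<beta>" for t
    using that kA by (cases "t = \<alpha>") (auto simp: Jf_def)
  note rc = rr_cases[OF a0 ab k0 kk, of s]
  consider (c1) "s \<ge> \<beta>/\<kappa>" | (c2) "\<alpha>/\<kappa> \<le> s" "s < \<beta>/\<kappa>"
    | (c3) "\<alpha>+1 \<le> s" "s < \<alpha>/\<kappa>" | (c4) "1 \<le> s" "s < \<alpha>+1" | (c5) "s < 1" by linarith
  then show ?thesis
  proof cases
    case c1
    then have r: "rr \<alpha> \<beta> \<kappa> s = \<beta>" using rc by simp
    have ks: "\<beta> \<le> \<kappa> * s" using c1 k0 by (simp add: field_simps)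
    show ?thesis
    proof (cases "\<rho> \<ge> \<beta>")
      case True
      then have "J \<rho> = J \<beta>" using ab by (simp add: Jf_def)
      then show ?thesis using r True assms by simp
    next
      case False
      have "J \<rho> \<le> \<kappa> * ln \<beta> + A + \<kappa> * (\<rho> - \<beta>) / \<beta>" using tanB[of \<beta> \<rho>] ab assms by simp
      also have "\<kappa> * (\<rho> - \<beta>) / \<beta> = (\<kappa> / \<beta>) * (\<rho> - \<beta>)" by simp
      also have "\<dots> \<le> (1 / s) * (\<rho> - \<beta>)"
        using False ks assms a0 ab by (intro mult_right_mono_neg) (auto simp: field_simps)
      finally show ?thesis using r Jmid[of \<beta>] ab by simp
    qed
  next
    case c2
    have t: "\<alpha> \<le> \<kappa> * s" "\<kappa> * s < \<beta>" using c2 k0 by (auto simp: field_simps)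
    have r: "rr \<alpha> \<beta> \<kappa> s = \<kappa> * s" using rc c2 by simp
    have "J \<rho> \<le> \<kappa> * ln (\<kappa>*s) + A + \<kappa> * (\<rho> - \<kappa>*s) / (\<kappa>*s)"
      using tanB[of "\<kappa>*s" \<rho>] t assms by simp
    also have "\<kappa> * (\<rho> - \<kappa>*s) / (\<kappa>*s) = (\<rho> - \<kappa>*s) / s" using k0 by simp
    finally show ?thesis using r Jmid[of "\<kappa>*s"] t by simp
  next
    case c3
    have ks: "\<kappa> * s < \<alpha>" using c3 k0 by (simp add: field_simps)
    have "s < \<beta> / \<kappa>" using c3 k0 ab by (smt (verit) divide_strict_right_mono)
    then have r: "rr \<alpha> \<beta> \<kappa> s = \<alpha>" using rc c3 by auto
    have Ja: "J \<alpha> = \<kappa> * ln \<alpha> + A" "J \<alpha> = ln (1 + \<alpha>)" using Jmid[of \<alpha>] Jlo[of \<alpha>] ab by auto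
    show ?thesis
    proof (cases "\<rho> \<ge> \<alpha>")
      case True
      have "J \<rho> \<le> \<kappa> * ln \<alpha> + A + \<kappa> * (\<rho> - \<alpha>) / \<alpha>" using tanB[of \<alpha> \<rho>] ab assms by simp
      also have "\<kappa> * (\<rho> - \<alpha>) / \<alpha> = (\<kappa> / \<alpha>) * (\<rho> - \<alpha>)" by simp
      also have "\<dots> \<le> (1 / s) * (\<rho> - \<alpha>)"
        using True ks assms a0 c3 by (intro mult_right_mono) (auto simp: field_simps)
      finally show ?thesis using r Ja by simp
    next
      case False
      have "J \<rho> \<le> ln (1 + \<alpha>) + (\<rho> - \<alpha>) / (1 + \<alpha>)" using tanA[of \<alpha> \<rho>] a0 assms by simp
      also have "(\<rho> - \<alpha>) / (1 + \<alpha>) = (1 / (1 + \<alpha>)) * (\<rho> - \<alpha>)" by simp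
      also have "\<dots> \<le> (1 / s) * (\<rho> - \<alpha>)"
        using False assms a0 c3 by (intro mult_right_mono_neg) (auto simp: field_simps)
      finally show ?thesis using r Ja by simp
    qed
  next
    case c4
    have "\<kappa> * s < \<kappa> * (1 + \<alpha>)" using c4 k0 by (intro mult_strict_left_mono) auto
    then have "\<kappa> * s < \<alpha>" using kk by linarith
    then have "s < \<alpha> / \<kappa>" "s < \<beta> / \<kappa>" using k0 ab by (auto simp: field_simps)
    then have r: "rr \<alpha> \<beta> \<kappa> s = s - 1" using rc c4 by auto
    have "J \<rho> \<le> ln (1 + (s-1)) + (\<rho> - (s-1)) / (1 + (s-1))" using tanA[of "s-1" \<rho>] c4 assms by simp
    then show ?thesis using r Jlo[of "s-1"] c4 by simp
  next
    case c5
    have "\<kappa> * s < \<kappa> * (1 + \<alpha>)" using c5 k0 a0 by (intro mult_strict_left_mono) auto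
    then have "\<kappa> * s < \<alpha>" using kk by linarith
    then have "s < \<alpha> / \<kappa>" "s < \<beta> / \<kappa>" using k0 ab by (auto simp: field_simps)
    then have r: "rr \<alpha> \<beta> \<kappa> s = 0" using rc c5 a0 by auto
    have "J \<rho> \<le> \<rho>" using tanA[of 0 \<rho>] a0 assms by simp
    also have "\<rho> \<le> \<rho> / s" using c5 assms by (simp add: field_simps mult_left_le)
    finally show ?thesis using r a0 by (simp add: Jf_def)
  qed
qed



lemma Jmax: assumes "0 \<le> \<rho>" shows "J \<rho> \<le> J \<beta>"
proof (cases "\<rho> \<ge> \<beta>")
  case True then show ?thesis using ab by (simp add: Jf_def)
next
  case False
  have "J \<rho> \<le> \<kappa> * ln \<beta> + A + \<kappa> * (\<rho> - \<beta>) / \<beta>" using tanB[of \<beta> \<rho>] ab assms by simp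
  also have "\<kappa> * (\<rho> - \<beta>) / \<beta> \<le> 0" using False k0 a0 ab
    by (intro divide_nonpos_pos mult_nonneg_nonpos) auto
  finally show ?thesis using ab a0 by (simp add: Jf_def)
qed

lemma rr_nonneg: "rr \<alpha> \<beta> \<kappa> s \<ge> 0"
  using a0 ab unfolding rr_def by (auto simp: min_def max_def)

lemma rr_nonpos: assumes "s \<le> 0" shows "rr \<alpha> \<beta> \<kappa> s = 0"
proof -
  have "\<kappa> * s \<le> 0" using assms k0 by (simp add: mult_nonneg_nonpos)
  then show ?thesis using a0 ab assms unfolding rr_def by (auto simp: min_def max_def)
qed

lemma rr_big: assumes "s \<ge> \<beta> / \<kappa>" shows "rr \<alpha> \<beta> \<kappa> s = \<beta>"
  using rr_cases[OF a0 ab k0 kk, of s] assms by simp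

end

theorem theorem3:
  fixes B :: nat and \<gamma> :: "nat \<Rightarrow> real" and P \<alpha> \<beta> \<kappa> a :: real
  assumes "\<forall>b\<in>{1..B}. \<gamma> b > 0"
    and "P > 0"
    and "0 < \<alpha>" and "\<alpha> < \<beta>" and "\<kappa> > 0"
    and "\<kappa> * log 2 \<alpha> + a = log 2 (1 + \<alpha>)"
    and "\<kappa> * (1 + \<alpha>) \<le> \<alpha>"
  shows "((\<Sum>b=1..B. \<beta> / \<gamma> b) / real B < P \<longrightarrow>
            is_optimal \<alpha> \<beta> \<kappa> a B P \<gamma> (\<lambda>b. \<beta> / \<gamma> b))
       \<and> (\<not> (\<Sum>b=1..B. \<beta> / \<gamma> b) / real B < P \<longrightarrow>
            (\<exists>\<eta>. (\<Sum>b=1..B. p_ref_eta \<alpha> \<beta> \<kappa> (\<gamma> b) \<eta>) / real B = P)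
          \<and> (\<forall>\<eta>. (\<Sum>b=1..B. p_ref_eta \<alpha> \<beta> \<kappa> (\<gamma> b) \<eta>) / real B = P \<longrightarrow>
                 is_optimal \<alpha> \<beta> \<kappa> a B P \<gamma> (\<lambda>b. p_ref_eta \<alpha> \<beta> \<kappa> (\<gamma> b) \<eta>)))"
proof -
  note g0 = assms(1)
  have l2: "ln (2::real) > 0" by simp
  have kA: "\<kappa> * ln \<alpha> + a * ln 2 = ln (1 + \<alpha>)"
  proof -
    have "(\<kappa> * log 2 \<alpha> + a) * ln 2 = log 2 (1 + \<alpha>) * ln 2" using assms(6) by simp
    then show ?thesis by (simp add: log_def algebra_simps)
  qed
  interpret P \<alpha> \<beta> \<kappa> "a * ln 2"
    using assms(3,4,5,7) kA by unfold_locales auto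
  have IJ: "I_ref \<alpha> \<beta> \<kappa> a x = J x / ln 2" for x
    using I_J[of \<alpha> \<beta> \<kappa> a x] l2 by (simp add: field_simps)
  have obj: "objective \<alpha> \<beta> \<kappa> a B \<gamma> q = (\<Sum>b=1..B. J (q b * \<gamma> b)) / ln 2" for q
    unfolding objective_def IJ by (simp add: sum_divide_distrib)
  have peq: "p_ref_eta \<alpha> \<beta> \<kappa> (\<gamma> b) \<eta> = rr \<alpha> \<beta> \<kappa> (\<gamma> b * \<eta>) / \<gamma> b"
    if "b \<in> {1..B}" for b \<eta>
    using p_eq[of "\<gamma> b" \<alpha> \<beta> \<kappa> \<eta>] g0 that assms(3,4,5,7) by auto
  show ?thesis
  proof (intro conjI impI)
    assume h: "(\<Sum>b=1..B. \<beta> / \<gamma> b) / real B < P"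
    have feas: "feasible B P (\<lambda>b. \<beta> / \<gamma> b)"
    proof -
      have "(\<Sum>b=1..B. \<beta> / \<gamma> b) \<le> real B * P"
      proof (cases "B = 0")
        case True then show ?thesis by simp
      next
        case False
        then show ?thesis using h by (simp add: field_simps)
      qed
      moreover have "\<forall>b\<in>{1..B}. \<beta> / \<gamma> b \<ge> 0" using g0 assms(3,4) by auto
      ultimately show ?thesis unfolding feasible_def by simp
    qed
    show "is_optimal \<alpha> \<beta> \<kappa> a B P \<gamma> (\<lambda>b. \<beta> / \<gamma> b)"
      unfolding is_optimal_def
    proof (intro conjI allI impI feas)
      fix q assume fq: "feasible B P q"
      have "(\<Sum>b=1..B. J (q b * \<gamma> b)) \<le> (\<Sum>b=1..B. J (\<beta> / \<gamma> b * \<gamma> b))"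
      proof (rule sum_mono)
        fix b assume b: "b \<in> {1..B}"
        then have "q b \<ge> 0" "\<gamma> b > 0" using fq g0 unfolding feasible_def by auto
        then have "q b * \<gamma> b \<ge> 0" by simp
        then show "J (q b * \<gamma> b) \<le> J (\<beta> / \<gamma> b * \<gamma> b)" using Jmax g0 b by auto
      qed
      then show "objective \<alpha> \<beta> \<kappa> a B \<gamma> q \<le> objective \<alpha> \<beta> \<kappa> a B \<gamma> (\<lambda>b. \<beta> / \<gamma> b)"
        unfolding obj using l2 by (simp add: divide_right_mono)
    qed
  next
    assume h: "\<not> (\<Sum>b=1..B. \<beta> / \<gamma> b) / real B < P"
    have B0: "B > 0" using h assms(2) by (cases "B = 0") auto
    have sumge: "(\<Sum>b=1..B. \<beta> / \<gamma> b) \<ge> real B * P" using h B0 by (simp add: field_simps)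
    define F where "F \<eta> = (\<Sum>b=1..B. rr \<alpha> \<beta> \<kappa> (\<gamma> b * \<eta>) / \<gamma> b)" for \<eta>
    have Feq: "(\<Sum>b=1..B. p_ref_eta \<alpha> \<beta> \<kappa> (\<gamma> b) \<eta>) = F \<eta>" for \<eta>
      unfolding F_def by (rule sum.cong) (auto simp: peq)
    have contF: "continuous_on {0..M} F" for M
      unfolding F_def rr_def using g0 by (intro continuous_intros) (metis atLeastAtMost_iff less_irrefl)
    define M where "M = (\<Sum>b=1..B. \<beta> / (\<kappa> * \<gamma> b))"
    have nn: "0 \<le> \<beta> / (\<kappa> * \<gamma> x)" if "x \<in> {1..B}" for x
    proof -
      have "\<kappa> * \<gamma> x > 0" using g0 that assms(5) by simp
      then show ?thesis using assms(3,4) by simp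
    qed
    have F0: "F 0 = 0" unfolding F_def using rr_nonpos by simp
    have FM: "F M = (\<Sum>b=1..B. \<beta> / \<gamma> b)"
      unfolding F_def
    proof (rule sum.cong)
      fix b assume b: "b \<in> {1..B}"
      have "\<beta> / (\<kappa> * \<gamma> b) \<le> M" unfolding M_def
        using b nn by (intro member_le_sum) auto
      then have "\<beta> / \<kappa> \<le> \<gamma> b * M" using g0 b assms(5) by (simp add: field_simps)
      then show "rr \<alpha> \<beta> \<kappa> (\<gamma> b * M) / \<gamma> b = \<beta> / \<gamma> b" using rr_big by simp
    qed simp
    have M0: "0 \<le> M" unfolding M_def using nn by (intro sum_nonneg) auto
    obtain \<eta> where "F \<eta> = real B * P"
      using IVT'[of F 0 "real B * P" M] F0 FM sumge M0 contF assms(2) by auto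
    then show "\<exists>\<eta>. (\<Sum>b=1..B. p_ref_eta \<alpha> \<beta> \<kappa> (\<gamma> b) \<eta>) / real B = P"
      using B0 unfolding Feq by (intro exI[of _ \<eta>]) simp
  next
    assume h: "\<not> (\<Sum>b=1..B. \<beta> / \<gamma> b) / real B < P"
    have B0: "B > 0" using h assms(2) by (cases "B = 0") auto
    show "\<forall>\<eta>. (\<Sum>b=1..B. p_ref_eta \<alpha> \<beta> \<kappa> (\<gamma> b) \<eta>) / real B = P \<longrightarrow>
                 is_optimal \<alpha> \<beta> \<kappa> a B P \<gamma> (\<lambda>b. p_ref_eta \<alpha> \<beta> \<kappa> (\<gamma> b) \<eta>)"
    proof (intro allI impI)
      fix \<eta> assume hE: "(\<Sum>b=1..B. p_ref_eta \<alpha> \<beta> \<kappa> (\<gamma> b) \<eta>) / real B = P"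
      define p where "p b = p_ref_eta \<alpha> \<beta> \<kappa> (\<gamma> b) \<eta>" for b
      have sp: "(\<Sum>b=1..B. p b) = real B * P" using hE B0 unfolding p_def by (simp add: field_simps)
      have pr: "p b * \<gamma> b = rr \<alpha> \<beta> \<kappa> (\<gamma> b * \<eta>)" if "b \<in> {1..B}" for b
      proof -
        have "\<gamma> b > 0" using g0 that by auto
        then show ?thesis using peq[OF that] unfolding p_def by simp
      qed
      have pnn: "p b \<ge> 0" if "b \<in> {1..B}" for b
      proof -
        have "\<gamma> b > 0" using g0 that by auto
        then show ?thesis using peq[OF that] rr_nonneg[of "\<gamma> b * \<eta>"] unfolding p_def by simp
      qed
      have eta0: "\<eta> > 0"
      proof (rule ccontr)
        assume "\<not> \<eta> > 0"
        then have "p b = 0" if "b \<in> {1..B}" for b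
        proof -
          have "\<gamma> b > 0" using g0 that by auto
          then have "\<gamma> b * \<eta> \<le> 0" using \<open>\<not> \<eta> > 0\<close> by (simp add: mult_nonneg_nonpos)
          then show ?thesis using peq[OF that] rr_nonpos[of "\<gamma> b * \<eta>"] unfolding p_def by simp
        qed
        then have "(\<Sum>b=1..B. p b) = 0" by simp
        then show False using sp B0 assms(2) by simp
      qed
      have feas: "feasible B P p" unfolding feasible_def using pnn sp by auto
      show "is_optimal \<alpha> \<beta> \<kappa> a B P \<gamma> (\<lambda>b. p_ref_eta \<alpha> \<beta> \<kappa> (\<gamma> b) \<eta>)"
        unfolding is_optimal_def p_def[symmetric]
      proof (intro conjI allI impI feas)
        fix q assume fq: "feasible B P q"
        have "(\<Sum>b=1..B. J (q b * \<gamma> b)) \<le> (\<Sum>b=1..B. J (p b * \<gamma> b) + (q b - p b) / \<eta>)"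
        proof (rule sum_mono)
          fix b assume b: "b \<in> {1..B}"
          have gb: "\<gamma> b > 0" using g0 b by auto
          have "q b \<ge> 0" using fq b unfolding feasible_def by auto
          then have q0: "q b * \<gamma> b \<ge> 0" using gb by simp
          have "J (q b * \<gamma> b) \<le> J (rr \<alpha> \<beta> \<kappa> (\<gamma> b * \<eta>)) + (q b * \<gamma> b - rr \<alpha> \<beta> \<kappa> (\<gamma> b * \<eta>)) / (\<gamma> b * \<eta>)"
            using kkt[OF _ q0] gb eta0 by simp
          also have "(q b * \<gamma> b - rr \<alpha> \<beta> \<kappa> (\<gamma> b * \<eta>)) / (\<gamma> b * \<eta>) = (q b - p b) / \<eta>"
            using pr[OF b, symmetric] gb eta0 by (simp add: field_simps)
          finally show "J (q b * \<gamma> b) \<le> J (p b * \<gamma> b) + (q b - p b) / \<eta>" using pr[OF b] by simp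
        qed
        also have "\<dots> = (\<Sum>b=1..B. J (p b * \<gamma> b)) + ((\<Sum>b=1..B. q b) - (\<Sum>b=1..B. p b)) / \<eta>"
          by (simp add: sum.distrib sum_divide_distrib[symmetric] sum_subtractf)
        also have "((\<Sum>b=1..B. q b) - (\<Sum>b=1..B. p b)) / \<eta> \<le> 0"
          using fq sp eta0 unfolding feasible_def by (intro divide_nonpos_pos) auto
        finally have "(\<Sum>b=1..B. J (q b * \<gamma> b)) \<le> (\<Sum>b=1..B. J (p b * \<gamma> b))" by simp
        then show "objective \<alpha> \<beta> \<kappa> a B \<gamma> q \<le> objective \<alpha> \<beta> \<kappa> a B \<gamma> p"
          unfolding obj using l2 by (simp add: divide_right_mono)
      qed
    qed
  qed
qed

end
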